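(* Let $ABCD$ be a (nondegenerate) rectangle and let $E,F,P,Q$ be points in the same plane. Assume that $h_{BC}(EF)>|AB|$ and $h_{AB}(PQ)>|BC|$. Then $$\mu(ABCDEFPQ)\geq \tfrac{1}{2}\bigl(h_{BC}(EF)-|AB|\bigr)|BC|+\tfrac{1}{2}\bigl(h_{AB}(PQ)-|BC|\bigr)|AB|+|AB||BC|.$$
   Context: For points $K_1,\dots,K_n$ in the plane, $\mu(K_1K_2\cdots K_n)$ denotes the area of the convex hull of $\{K_1,\dots,K_n\}$. For points $A,B$ and distinct points $D,C$, the height $h_{DC}(AB)$ is the distance between the two lines parallel to $DC$ passing through $A$ and through $B$ (i.e. the length of the perpendicular from one of $A,B$ to the parallel of $DC$ through the other). $|XY|$ denotes the length of segment $XY$. *)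

theory Defs
  imports "HOL-Analysis.Analysis"
begin

type_synonym point = "real ^ 2"

definition hull_area :: "point set \<Rightarrow> real" where
  "hull_area S = measure lebesgue (convex hull S)"

definition is_rectangle :: "point \<Rightarrow> point \<Rightarrow> point \<Rightarrow> point \<Rightarrow> bool" where
  "is_rectangle A B C D \<longleftrightarrow> A \<noteq> B \<and> B \<noteq> C \<and> (A - B) \<bullet> (C - B) = 0 \<and> D = A + (C - B)"

text \<open>h_{DC}(AB): distance from B to the line through A parallel to DC.\<close>
definition height :: "point \<Rightarrow> point \<Rightarrow> point \<Rightarrow> point \<Rightarrow> real" where
  "height D C A B = infdist B {A + t *\<^sub>R (C - D) | t. True}"

end

theory Submission
  imports Defs
begin


definition cr :: "point \<Rightarrow> point \<Rightarrow> real" where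
  "cr p q = p$1 * q$2 - p$2 * q$1"

lemma inner2: "(x::point) \<bullet> y = x$1*y$1 + x$2*y$2"
  by (simp add: inner_vec_def sum_2)

lemma cr_gram: "cr p q * cr u w = (p\<bullet>u)*(q\<bullet>w) - (p\<bullet>w)*(q\<bullet>u)"
  unfolding cr_def inner2 by algebra

lemma cr_lagrange: "(cr u w)^2 + (u\<bullet>w)^2 = (u\<bullet>u)*(w\<bullet>w)"
  unfolding cr_def inner2 by algebra

lemma abs_cr: assumes "u \<bullet> w = 0" shows "\<bar>cr u w\<bar> = norm u * norm w"
proof -
  have "(cr u w)^2 = (norm u * norm w)^2"
    using cr_lagrange[of u w] assms by (simp add: power_mult_distrib power2_norm_eq_inner)
  then have "sqrt ((cr u w)^2) = sqrt ((norm u * norm w)^2)" by simp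
  then show ?thesis by simp
qed

lemma tri_area:
  fixes X Y Z u w :: point
  assumes "u \<bullet> w = 0" "u \<noteq> 0" "w \<noteq> 0"
  shows "measure lebesgue (convex hull {X,Y,Z}) =
    \<bar>((Y-X)\<bullet>u)*((Z-X)\<bullet>w) - ((Y-X)\<bullet>w)*((Z-X)\<bullet>u)\<bar> / (2*norm u*norm w)"
proof -
  have cpt: "compact (convex hull {X,Y,Z})" by (intro finite_imp_compact_convex_hull) auto
  have "measure lebesgue (convex hull {X,Y,Z}) = measure lborel (convex hull {X,Y,Z})"
    using cpt by (intro measure_completion) (auto dest: compact_imp_closed)
  also have "\<dots> = \<bar>cr (Y-X) (Z-X)\<bar>/2"
    by (subst content_triangle) (simp add: cr_def abs_minus_commute mult.commute)
  also have "\<bar>cr (Y-X) (Z-X)\<bar> = \<bar>cr (Y-X) (Z-X) * cr u w\<bar> / (norm u * norm w)"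
    using abs_cr[OF assms(1)] assms by (simp add: abs_mult)
  finally have "measure lebesgue (convex hull {X,Y,Z}) = \<bar>cr (Y-X) (Z-X) * cr u w\<bar> / (norm u * norm w) / 2" .
  moreover have "\<And>x n m::real. x / (n*m) / 2 = x / (2*n*m)" by simp
  ultimately show ?thesis by (simp only: cr_gram)
qed

lemma perp2: assumes "q \<bullet> w = 0" "u \<bullet> w = 0" "w \<noteq> (0::point)"
  shows "(q\<bullet>u)^2 = (q\<bullet>q)*(u\<bullet>u)"
proof -
  have "cr q u * w$1 = 0" "cr q u * w$2 = 0" using assms(1,2) unfolding cr_def inner2 by algebra+
  moreover have "w$1 \<noteq> 0 \<or> w$2 \<noteq> 0" using assms(3) by (simp add: vec_eq_iff forall_2)
  ultimately have "cr q u = 0" by auto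
  then show ?thesis using cr_lagrange[of q u] by simp
qed

lemma height_le:
  fixes P Q d e :: point
  assumes "d \<bullet> e = 0" "d \<noteq> 0" "e \<noteq> 0"
  shows "infdist Q {P + t *\<^sub>R d | t. True} \<le> \<bar>(Q-P)\<bullet>e\<bar> / norm e"
proof -
  define t where "t = ((Q-P)\<bullet>d)/(d\<bullet>d)"
  define q where "q = Q - P - t *\<^sub>R d"
  have dd: "d \<bullet> d \<noteq> 0" using assms by simp
  have qd: "q \<bullet> d = 0" using dd by (simp add: q_def t_def inner_diff_left)
  have qe: "q \<bullet> e = (Q-P)\<bullet>e" using assms(1) by (simp add: q_def inner_diff_left)
  have "(q\<bullet>e)^2 = (q\<bullet>q)*(e\<bullet>e)" using perp2[OF qd _ assms(2)] assms(1) by (simp add: inner_commute)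
  hence "(norm q * norm e)^2 = (q\<bullet>e)^2" by (simp add: power_mult_distrib power2_norm_eq_inner)
  hence "sqrt ((norm q * norm e)^2) = sqrt ((q\<bullet>e)^2)" by simp
  hence "norm q * norm e = \<bar>q\<bullet>e\<bar>" by simp
  hence nq: "norm q = \<bar>(Q-P)\<bullet>e\<bar> / norm e" using assms(3) qe by (simp add: field_simps)
  have "infdist Q {P + t *\<^sub>R d | t. True} \<le> dist Q (P + t *\<^sub>R d)"
    by (intro infdist_le) auto
  also have "dist Q (P + t *\<^sub>R d) = norm q" by (simp add: q_def dist_norm algebra_simps)
  finally show ?thesis using nq by simp
qed



lemma hull_le3:
  assumes "n \<bullet> (X - V) \<le> c" "n \<bullet> (Y - V) \<le> c" "n \<bullet> (Z - V) \<le> c"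
  shows "convex hull {X,Y,Z} \<subseteq> {p. n \<bullet> (p - V) \<le> c}"
proof (rule hull_minimal)
  have "{p. n \<bullet> (p - V) \<le> c} = {p. n \<bullet> p \<le> c + n \<bullet> V}" by (auto simp: inner_diff_right)
  then show "convex {p. n \<bullet> (p - V) \<le> (c::real)}" using convex_halfspace_le by metis
qed (use assms in auto)

lemma hull_ge3:
  assumes "n \<bullet> (X - V) \<ge> c" "n \<bullet> (Y - V) \<ge> c" "n \<bullet> (Z - V) \<ge> c"
  shows "convex hull {X,Y,Z} \<subseteq> {p. n \<bullet> (p - V) \<ge> c}"
proof (rule hull_minimal)
  have "{p. n \<bullet> (p - V) \<ge> c} = {p. n \<bullet> p \<ge> c + n \<bullet> V}" by (auto simp: inner_diff_right)
  then show "convex {p. n \<bullet> (p - V) \<ge> (c::real)}" using convex_halfspace_ge by metis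
qed (use assms in auto)

lemma sep_neg:
  fixes n V :: point
  assumes "n \<noteq> 0" "X \<subseteq> {p. n \<bullet> (p - V) \<le> c}" "Y \<subseteq> {p. n \<bullet> (p - V) \<ge> c}"
  shows "negligible (X \<inter> Y)"
proof (rule negligible_subset)
  show "negligible {p. n \<bullet> p = c + n \<bullet> V}" using assms(1) by (intro negligible_hyperplane) auto
  show "X \<inter> Y \<subseteq> {p. n \<bullet> p = c + n \<bullet> V}"
  proof
    fix x assume "x \<in> X \<inter> Y"
    then have "n \<bullet> (x - V) \<le> c" "n \<bullet> (x - V) \<ge> c" using assms(2,3) by auto
    then show "x \<in> {p. n \<bullet> p = c + n \<bullet> V}" by (simp add: inner_diff_right)
  qed
qed

lemma corner:
  fixes V e1 e2 Pb Pl :: point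
  assumes o: "e1 \<bullet> e2 = 0" "e1 \<noteq> 0" "e2 \<noteq> 0"
    and h1: "e2 \<bullet> (Pb - V) \<le> 0" and h2: "e1 \<bullet> (Pl - V) \<le> 0"
    and h3: "e1 \<bullet> (Pb - V) \<ge> e1 \<bullet> (Pl - V)" and h4: "e2 \<bullet> (Pl - V) \<ge> e2 \<bullet> (Pb - V)"
  shows "negligible (convex hull {V, V + e1, Pb} \<inter> convex hull {V, V + e2, Pl})"
proof -
  define al where "al = - (e1 \<bullet> (Pl - V))"
  define ga where "ga = - (e2 \<bullet> (Pb - V))"
  have al0: "al \<ge> 0" and ga0: "ga \<ge> 0" using h1 h2 by (auto simp: al_def ga_def)
  have e11: "e1 \<bullet> e1 > 0" and e22: "e2 \<bullet> e2 > 0" using o by auto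
  have e21: "e2 \<bullet> e1 = 0" using o by (simp add: inner_commute)
  show ?thesis
  proof (cases "al = 0 \<and> ga = 0")
    case True
    show ?thesis
    proof (subst Int_commute, rule sep_neg[of e1 _ V 0])
      show "e1 \<noteq> 0" by (rule o)
      show "convex hull {V, V + e2, Pl} \<subseteq> {p. e1 \<bullet> (p - V) \<le> 0}"
        by (rule hull_le3) (use o h2 in auto)
      show "convex hull {V, V + e1, Pb} \<subseteq> {p. e1 \<bullet> (p - V) \<ge> 0}"
        by (rule hull_ge3) (use True h3 in \<open>auto simp: al_def\<close>)
    qed
  next
    case False
    define n where "n = ga *\<^sub>R e1 - al *\<^sub>R e2"
    have "n \<bullet> e1 = ga * (e1 \<bullet> e1)" "n \<bullet> e2 = - al * (e2 \<bullet> e2)"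
      using o e21 by (auto simp: n_def inner_diff_left)
    hence "n \<noteq> 0" using False e11 e22 by auto
    have p1: "0 \<le> ga * (e1 \<bullet> (Pb - V) - e1 \<bullet> (Pl - V))" using ga0 h3 by simp
    have p2: "0 \<le> al * (e2 \<bullet> (Pl - V) - e2 \<bullet> (Pb - V))" using al0 h4 by simp
    show ?thesis
    proof (subst Int_commute, rule sep_neg[of n _ V 0])
      show "n \<noteq> 0" by fact
      show "convex hull {V, V + e2, Pl} \<subseteq> {p. n \<bullet> (p - V) \<le> 0}"
      proof (rule hull_le3)
        show "n \<bullet> (V + e2 - V) \<le> 0" using o e22 al0 by (simp add: n_def inner_diff_left e21)
        show "n \<bullet> (Pl - V) \<le> 0" using p2 by (simp add: n_def inner_diff_left al_def ga_def algebra_simps)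
      qed simp
      show "convex hull {V, V + e1, Pb} \<subseteq> {p. n \<bullet> (p - V) \<ge> 0}"
      proof (rule hull_ge3)
        show "n \<bullet> (V + e1 - V) \<ge> 0" using o e11 ga0 by (simp add: n_def inner_diff_left e21 less_imp_le)
        show "n \<bullet> (Pb - V) \<ge> 0" using p1 by (simp add: n_def inner_diff_left al_def ga_def algebra_simps)
      qed simp
    qed
  qed
qed

lemma measure_Un_neg:
  assumes "X \<in> lmeasurable" "Y \<in> lmeasurable" "negligible (X \<inter> Y)"
  shows "measure lebesgue (X \<union> Y) = measure lebesgue X + measure lebesgue Y"
  using measure_Un3[OF assms(1,2)] negligible_imp_measure0[OF assms(3)] by simp

lemma tri_lmeas: "convex hull {X,Y,Z::point} \<in> lmeasurable"
  by (rule lmeasurable_compact, rule finite_imp_compact_convex_hull) simp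



lemma geom:
  fixes B u w L Rr Bo To :: point
  assumes o: "u \<bullet> w = 0" "u \<noteq> 0" "w \<noteq> 0"
  and x1: "u \<bullet> (L - B) \<le> 0" "u \<bullet> (L - B) \<le> u \<bullet> (Bo - B)" "u \<bullet> (L - B) \<le> u \<bullet> (To - B)"
  and x2: "u \<bullet> (Rr - B) \<ge> u \<bullet> u" "u \<bullet> (Rr - B) \<ge> u \<bullet> (Bo - B)" "u \<bullet> (Rr - B) \<ge> u \<bullet> (To - B)"
  and x3: "w \<bullet> (Bo - B) \<le> 0" "w \<bullet> (Bo - B) \<le> w \<bullet> (L - B)" "w \<bullet> (Bo - B) \<le> w \<bullet> (Rr - B)"
  and x4: "w \<bullet> (To - B) \<ge> w \<bullet> w" "w \<bullet> (To - B) \<ge> w \<bullet> (L - B)" "w \<bullet> (To - B) \<ge> w \<bullet> (Rr - B)"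
  shows "measure lebesgue (convex hull {B+u, B, B+w, B+u+w, L, Rr, Bo, To}) \<ge>
    (2*(u\<bullet>u)*(w\<bullet>w) - (u\<bullet>u)*(w \<bullet> (Bo - B)) + (w\<bullet>w)*(u \<bullet> (Rr - B) - u\<bullet>u)
     + (u\<bullet>u)*(w \<bullet> (To - B) - w\<bullet>w) - (w\<bullet>w)*(u \<bullet> (L - B))) / (2*norm u*norm w)"
proof -
  define K where "K = convex hull {B+u, B, B+w, B+u+w, L, Rr, Bo, To}"
  define Ra where "Ra = convex hull {B, B+u, B+w}"
  define Rb where "Rb = convex hull {B+u, B+w, B+u+w}"
  define Tb where "Tb = convex hull {B, B+u, Bo}"
  define Tr where "Tr = convex hull {B+u, B+u+w, Rr}"
  define Tt where "Tt = convex hull {B+w, B+u+w, To}"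
  define Tl where "Tl = convex hull {B, B+w, L}"
  have wu: "w \<bullet> u = 0" using o by (simp add: inner_commute)
  have uu: "u \<bullet> u > 0" and ww: "w \<bullet> w > 0" using o by auto
  note NS = inner_diff_left inner_diff_right inner_add_left inner_add_right o(1) wu
  note ex = x1 x2 x3 x4
  note ex' = ex[unfolded inner_diff_right]
  have nu: "norm u > 0" "norm w > 0" using o by auto
  have aRa: "measure lebesgue Ra = (u\<bullet>u)*(w\<bullet>w) / (2*norm u*norm w)"
    unfolding Ra_def tri_area[OF o] using uu ww by (simp add: NS)
  have aRb: "measure lebesgue Rb = (u\<bullet>u)*(w\<bullet>w) / (2*norm u*norm w)"
    unfolding Rb_def tri_area[OF o] using uu ww by (simp add: NS)
  have aTb: "measure lebesgue Tb = (u\<bullet>u)*(-(w \<bullet> (Bo - B))) / (2*norm u*norm w)"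
  proof -
    have "measure lebesgue Tb = \<bar>(u\<bullet>u)*(w \<bullet> (Bo - B))\<bar> / (2*norm u*norm w)"
      unfolding Tb_def tri_area[OF o] by (simp add: NS inner_commute)
    then show ?thesis using uu x3(1) by (simp add: abs_mult abs_of_nonpos)
  qed

  have aTr: "measure lebesgue Tr = (w\<bullet>w)*(u \<bullet> (Rr - B) - u\<bullet>u) / (2*norm u*norm w)"
  proof -
    have "measure lebesgue Tr = \<bar>(w\<bullet>w)*(u\<bullet>u - u \<bullet> (Rr - B))\<bar> / (2*norm u*norm w)"
      unfolding Tr_def tri_area[OF o] by (simp add: NS inner_commute algebra_simps)
    then show ?thesis using ww x2(1) by (simp add: abs_mult abs_of_nonpos)
  qed
  have aTt: "measure lebesgue Tt = (u\<bullet>u)*(w \<bullet> (To - B) - w\<bullet>w) / (2*norm u*norm w)"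
  proof -
    have "measure lebesgue Tt = \<bar>(u\<bullet>u)*(w \<bullet> (To - B) - w\<bullet>w)\<bar> / (2*norm u*norm w)"
      unfolding Tt_def tri_area[OF o] by (simp add: NS inner_commute algebra_simps)
    then show ?thesis using uu x4(1) by (simp add: abs_mult abs_of_nonneg)
  qed
  have aTl: "measure lebesgue Tl = (w\<bullet>w)*(-(u \<bullet> (L - B))) / (2*norm u*norm w)"
  proof -
    have "measure lebesgue Tl = \<bar>(w\<bullet>w)*(-(u \<bullet> (L - B)))\<bar> / (2*norm u*norm w)"
      unfolding Tl_def tri_area[OF o] by (simp add: NS inner_commute algebra_simps)
    then show ?thesis using ww x1(1) by (simp add: abs_mult abs_of_nonneg)
  qed
  define n0 where "n0 = (w\<bullet>w) *\<^sub>R u + (u\<bullet>u) *\<^sub>R w"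
  have n0: "n0 \<noteq> 0"
  proof
    assume "n0 = 0" then have "n0 \<bullet> u = 0" by simp
    then show False using uu ww by (simp add: n0_def NS)
  qed
  have Ra1: "Ra \<subseteq> {p. w \<bullet> (p - B) \<ge> 0}" unfolding Ra_def by (rule hull_ge3) (use ww in \<open>simp_all add: NS\<close>)
  have Ra2: "Ra \<subseteq> {p. w \<bullet> (p - B) \<le> w\<bullet>w}" unfolding Ra_def by (rule hull_le3) (use ww in \<open>simp_all add: NS\<close>)
  have Ra3: "Ra \<subseteq> {p. u \<bullet> (p - B) \<ge> 0}" unfolding Ra_def by (rule hull_ge3) (use uu in \<open>simp_all add: NS\<close>)
  have Ra4: "Ra \<subseteq> {p. u \<bullet> (p - B) \<le> u\<bullet>u}" unfolding Ra_def by (rule hull_le3) (use uu in \<open>simp_all add: NS\<close>)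
  have Ra5: "Ra \<subseteq> {p. n0 \<bullet> (p - B) \<le> (u\<bullet>u)*(w\<bullet>w)}" unfolding Ra_def
    by (rule hull_le3) (use uu ww in \<open>simp_all add: NS n0_def\<close>)
  have Rb1: "Rb \<subseteq> {p. w \<bullet> (p - B) \<ge> 0}" unfolding Rb_def by (rule hull_ge3) (use ww in \<open>simp_all add: NS\<close>)
  have Rb2: "Rb \<subseteq> {p. w \<bullet> (p - B) \<le> w\<bullet>w}" unfolding Rb_def by (rule hull_le3) (use ww in \<open>simp_all add: NS\<close>)
  have Rb3: "Rb \<subseteq> {p. u \<bullet> (p - B) \<ge> 0}" unfolding Rb_def by (rule hull_ge3) (use uu in \<open>simp_all add: NS\<close>)
  have Rb4: "Rb \<subseteq> {p. u \<bullet> (p - B) \<le> u\<bullet>u}" unfolding Rb_def by (rule hull_le3) (use uu in \<open>simp_all add: NS\<close>)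
  have Rb5: "Rb \<subseteq> {p. n0 \<bullet> (p - B) \<ge> (u\<bullet>u)*(w\<bullet>w)}" unfolding Rb_def
    by (rule hull_ge3) (use uu ww in \<open>simp_all add: NS n0_def\<close>)
  have Tb1: "Tb \<subseteq> {p. w \<bullet> (p - B) \<le> 0}" unfolding Tb_def by (rule hull_le3) (use x3(1) in \<open>simp_all add: NS\<close>)
  have Tt1: "Tt \<subseteq> {p. w \<bullet> (p - B) \<ge> w\<bullet>w}" unfolding Tt_def by (rule hull_ge3) (use x4(1) in \<open>simp_all add: NS\<close>)
  have Tt2: "Tt \<subseteq> {p. w \<bullet> (p - B) \<ge> 0}" 
  proof (rule subsetI)
    fix p assume "p \<in> Tt" then have "w\<bullet>w \<le> w \<bullet> (p - B)" using Tt1 by blast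
    then have "w \<bullet> (p - B) \<ge> 0" using ww by linarith
    then show "p \<in> {p. w \<bullet> (p - B) \<ge> 0}" by simp
  qed
  have Tl1: "Tl \<subseteq> {p. u \<bullet> (p - B) \<le> 0}" unfolding Tl_def by (rule hull_le3) (use x1(1) in \<open>simp_all add: NS\<close>)
  have Tr1: "Tr \<subseteq> {p. u \<bullet> (p - B) \<ge> u\<bullet>u}" unfolding Tr_def by (rule hull_ge3) (use x2(1) in \<open>simp_all add: NS\<close>)
  have Tr2: "Tr \<subseteq> {p. u \<bullet> (p - B) \<ge> 0}" 
  proof (rule subsetI)
    fix p assume "p \<in> Tr" then have "u\<bullet>u \<le> u \<bullet> (p - B)" using Tr1 by blast
    then have "u \<bullet> (p - B) \<ge> 0" using uu by linarith
    then show "p \<in> {p. u \<bullet> (p - B) \<ge> 0}" by simp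
  qed
  have N1: "negligible (Ra \<inter> Rb)" by (rule sep_neg[OF n0 Ra5 Rb5])
  have N2: "negligible (Ra \<inter> Tb)" "negligible (Rb \<inter> Tb)"
    using sep_neg[OF o(3) Tb1 Ra1] sep_neg[OF o(3) Tb1 Rb1] by (simp_all add: Int_commute)
  have N3: "negligible (Ra \<inter> Tr)" "negligible (Rb \<inter> Tr)"
    using sep_neg[OF o(2) Ra4 Tr1] sep_neg[OF o(2) Rb4 Tr1] by simp_all
  have N4: "negligible (Ra \<inter> Tt)" "negligible (Rb \<inter> Tt)"
    using sep_neg[OF o(3) Ra2 Tt1] sep_neg[OF o(3) Rb2 Tt1] by simp_all
  have N5: "negligible (Ra \<inter> Tl)" "negligible (Rb \<inter> Tl)"
    using sep_neg[OF o(2) Tl1 Ra3] sep_neg[OF o(2) Tl1 Rb3] by (simp_all add: Int_commute)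
  have N6: "negligible (Tb \<inter> Tt)" using sep_neg[OF o(3) Tb1 Tt2] .
  have N7: "negligible (Tr \<inter> Tl)" using sep_neg[OF o(2) Tl1 Tr2] by (simp add: Int_commute)
  have N8: "negligible (Tb \<inter> Tl)"
    unfolding Tb_def Tl_def using o ex' by (intro corner) (simp_all add: NS)
  have N9: "negligible (Tb \<inter> Tr)"
  proof -
    have "negligible (convex hull {B+u, B+u+ -u, Bo} \<inter> convex hull {B+u, B+u+w, Rr})"
      using o ex' by (intro corner) (simp_all add: NS)
    moreover have "{B+u, B+u+ -u, Bo} = {B, B+u, Bo}" by auto
    ultimately show ?thesis unfolding Tb_def Tr_def by simp
  qed
  have N10: "negligible (Tr \<inter> Tt)"
  proof -
    have "negligible (convex hull {B+u+w, B+u+w+ -w, Rr} \<inter> convex hull {B+u+w, B+u+w+ -u, To})"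
      using o ex' by (intro corner) (simp_all add: NS)
    moreover have "{B+u+w, B+u+w+ -w, Rr} = {B+u, B+u+w, Rr}" by auto
    moreover have "{B+u+w, B+u+w+ -u, To} = {B+w, B+u+w, To}" by (auto simp: algebra_simps)
    ultimately show ?thesis unfolding Tt_def Tr_def by simp
  qed
  have N11: "negligible (Tt \<inter> Tl)"
  proof -
    have "negligible (convex hull {B+w, B+w+u, To} \<inter> convex hull {B+w, B+w+ -w, L})"
      using o ex' by (intro corner) (simp_all add: NS)
    moreover have "{B+w, B+w+u, To} = {B+w, B+u+w, To}" by (auto simp: algebra_simps)
    moreover have "{B+w, B+w+ -w, L} = {B, B+w, L}" by auto
    ultimately show ?thesis unfolding Tt_def Tl_def by simp
  qed
  have M: "Ra \<in> lmeasurable" "Rb \<in> lmeasurable" "Tb \<in> lmeasurable" "Tr \<in> lmeasurable" "Tt \<in> lmeasurable" "Tl \<in> lmeasurable"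
    unfolding Ra_def Rb_def Tb_def Tr_def Tt_def Tl_def by (rule tri_lmeas)+
  have U: "measure lebesgue (Ra \<union> Rb \<union> Tb \<union> Tr \<union> Tt \<union> Tl) =
     measure lebesgue Ra + measure lebesgue Rb + measure lebesgue Tb + measure lebesgue Tr + measure lebesgue Tt + measure lebesgue Tl"
  proof -
    have U1: "Ra \<union> Rb \<in> lmeasurable" using M by (intro fmeasurable.Un)
    have U2: "Ra \<union> Rb \<union> Tb \<in> lmeasurable" using U1 M by (intro fmeasurable.Un)
    have U3: "Ra \<union> Rb \<union> Tb \<union> Tr \<in> lmeasurable" using U2 M by (intro fmeasurable.Un)
    have U4: "Ra \<union> Rb \<union> Tb \<union> Tr \<union> Tt \<in> lmeasurable" using U3 M by (intro fmeasurable.Un)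
    have e1: "measure lebesgue (Ra \<union> Rb) = measure lebesgue Ra + measure lebesgue Rb"
      by (rule measure_Un_neg[OF M(1,2) N1])
    have e2: "measure lebesgue (Ra \<union> Rb \<union> Tb) = measure lebesgue (Ra \<union> Rb) + measure lebesgue Tb"
      by (rule measure_Un_neg[OF U1 M(3)]) (simp add: Int_Un_distrib2 negligible_Un N2)
    have e3: "measure lebesgue (Ra \<union> Rb \<union> Tb \<union> Tr) = measure lebesgue (Ra \<union> Rb \<union> Tb) + measure lebesgue Tr"
      by (rule measure_Un_neg[OF U2 M(4)]) (simp add: Int_Un_distrib2 negligible_Un N3 N9)
    have e4: "measure lebesgue (Ra \<union> Rb \<union> Tb \<union> Tr \<union> Tt) = measure lebesgue (Ra \<union> Rb \<union> Tb \<union> Tr) + measure lebesgue Tt"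
      by (rule measure_Un_neg[OF U3 M(5)]) (simp add: Int_Un_distrib2 negligible_Un N4 N6 N10)
    have N7': "negligible (Tl \<inter> Tr)" using N7 by (simp add: Int_commute)
    have e5: "measure lebesgue (Ra \<union> Rb \<union> Tb \<union> Tr \<union> Tt \<union> Tl) = measure lebesgue (Ra \<union> Rb \<union> Tb \<union> Tr \<union> Tt) + measure lebesgue Tl"
      by (rule measure_Un_neg[OF U4 M(6)]) (simp add: Int_Un_distrib2 negligible_Un N5 N7 N8 N11)
    show ?thesis using e1 e2 e3 e4 e5 by simp
  qed
  have sub: "Ra \<union> Rb \<union> Tb \<union> Tr \<union> Tt \<union> Tl \<subseteq> K"
    unfolding K_def Ra_def Rb_def Tb_def Tr_def Tt_def Tl_def by (intro Un_least hull_mono) auto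
  have "measure lebesgue (Ra \<union> Rb \<union> Tb \<union> Tr \<union> Tt \<union> Tl) \<le> measure lebesgue K"
  proof (rule measure_mono_fmeasurable[OF sub])
    show "Ra \<union> Rb \<union> Tb \<union> Tr \<union> Tt \<union> Tl \<in> sets lebesgue" using M by (intro sets.Un) (auto intro: fmeasurableD)
    show "K \<in> fmeasurable lebesgue" unfolding K_def
      by (rule lmeasurable_compact, rule finite_imp_compact_convex_hull) simp
  qed
  moreover have "measure lebesgue Ra + measure lebesgue Rb + measure lebesgue Tb + measure lebesgue Tr + measure lebesgue Tt + measure lebesgue Tl =
    (2*(u\<bullet>u)*(w\<bullet>w) - (u\<bullet>u)*(w \<bullet> (Bo - B)) + (w\<bullet>w)*(u \<bullet> (Rr - B) - u\<bullet>u)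
     + (u\<bullet>u)*(w \<bullet> (To - B) - w\<bullet>w) - (w\<bullet>w)*(u \<bullet> (L - B))) / (2*norm u*norm w)"
    unfolding aRa aRb aTb aTr aTt aTl add_divide_distrib[symmetric]
    by (rule arg_cong[where f="\<lambda>x. x/(2*norm u*norm w)"]) (simp add: algebra_simps)
  ultimately show ?thesis unfolding K_def[symmetric] U by simp
qed



lemma ex_min: assumes "finite M" "M \<noteq> {}" shows "\<exists>x\<in>M. \<forall>y\<in>M. (f::_\<Rightarrow>real) x \<le> f y"
proof -
  have "Min (f ` M) \<in> f ` M" using assms by (intro Min_in) auto
  then obtain x where "x \<in> M" "f x = Min (f ` M)" by (metis imageE)
  then show ?thesis using assms(1) by (metis Min_le finite_imageI imageI)
qed

lemma ex_max: assumes "finite M" "M \<noteq> {}" shows "\<exists>x\<in>M. \<forall>y\<in>M. (f::_\<Rightarrow>real) y \<le> f x"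
proof -
  have "Max (f ` M) \<in> f ` M" using assms by (intro Max_in) auto
  then obtain x where "x \<in> M" "f x = Max (f ` M)" by (metis imageE)
  then show ?thesis using assms(1) by (metis Max_ge finite_imageI imageI)
qed

lemma fin_ineq:
  fixes a b h1 h2 x1 x2 y1 y2 :: real
  assumes "a > 0" "b > 0" "h1 * a \<le> x2 - x1" "h2 * b \<le> y2 - y1"
  shows "(1/2) * (h1 - a) * b + (1/2) * (h2 - b) * a + a * b \<le>
    (2*a^2*b^2 - a^2*y1 + b^2*(x2 - a^2) + a^2*(y2 - b^2) - b^2*x1) / (2*a*b)"
proof -
  have r: "(2*a^2*b^2 - a^2*y1 + b^2*(x2 - a^2) + a^2*(y2 - b^2) - b^2*x1) / (2*a*b)
     = b * (x2 - x1) / (2*a) + a * (y2 - y1) / (2*b)"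
    using assms(1,2) by (simp add: field_simps power2_eq_square)
  have i1: "b * h1 / 2 \<le> b * (x2 - x1) / (2*a)"
  proof -
    have "b * h1 / 2 = (b * (h1 * a)) / (2*a)" using assms(1,2) by (simp add: field_simps)
    also have "\<dots> \<le> b * (x2 - x1) / (2*a)"
      using mult_left_mono[OF assms(3), of b] assms(1,2) by (intro divide_right_mono) auto
    finally show ?thesis .
  qed
  have i2: "a * h2 / 2 \<le> a * (y2 - y1) / (2*b)"
  proof -
    have "a * h2 / 2 = (a * (h2 * b)) / (2*b)" using assms(1,2) by (simp add: field_simps)
    also have "\<dots> \<le> a * (y2 - y1) / (2*b)"
      using mult_left_mono[OF assms(4), of a] assms(1,2) by (intro divide_right_mono) auto
    finally show ?thesis .
  qed
  have "(1/2) * (h1 - a) * b + (1/2) * (h2 - b) * a + a * b = b * h1 / 2 + a * h2 / 2"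
    by (simp add: field_simps)
  then show ?thesis using r i1 i2 by linarith
qed

theorem mainTheorem4:
  fixes A B C D E F P Q :: point
  assumes "is_rectangle A B C D"
    and "height B C E F > dist A B"
    and "height A B P Q > dist B C"
  shows "hull_area {A, B, C, D, E, F, P, Q} \<ge>
           (1/2) * (height B C E F - dist A B) * dist B C
         + (1/2) * (height A B P Q - dist B C) * dist A B
         + dist A B * dist B C"
proof -
  define u where "u = A - B"
  define w where "w = C - B"
  have uw: "u \<bullet> w = 0" "u \<noteq> 0" "w \<noteq> 0" and Dd: "D = A + w"
    using assms(1) unfolding is_rectangle_def u_def w_def by auto
  have A': "A = B + u" and C': "C = B + w" and D': "D = B + u + w"
    using Dd by (auto simp: u_def w_def)
  have dAB: "dist A B = norm u" by (simp add: u_def dist_norm)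
  have dBC: "dist B C = norm w" by (simp add: w_def dist_norm norm_minus_commute)
  have wu: "w \<bullet> u = 0" using uw by (simp add: inner_commute)
  have h1: "height B C E F \<le> \<bar>(F - E) \<bullet> u\<bar> / norm u"
    unfolding height_def w_def[symmetric] using height_le[of w u] uw wu by simp
  have h2: "height A B P Q \<le> \<bar>(Q - P) \<bullet> w\<bar> / norm w"
  proof -
    have "B - A = - u" by (simp add: u_def)
    then show ?thesis unfolding height_def using height_le[of "-u" w] uw by simp
  qed
  define M where "M = {B, D, E, F, P, Q}"
  have fM: "finite M" "M \<noteq> {}" by (auto simp: M_def)
  define sg where "sg X = u \<bullet> (X - B)" for X
  define tu where "tu X = w \<bullet> (X - B)" for X
  obtain L where L: "L \<in> M" "\<forall>y\<in>M. sg L \<le> sg y" using ex_min[OF fM, of sg] by blast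
  obtain Rr where Rr: "Rr \<in> M" "\<forall>y\<in>M. sg y \<le> sg Rr" using ex_max[OF fM, of sg] by blast
  obtain Bo where Bo: "Bo \<in> M" "\<forall>y\<in>M. tu Bo \<le> tu y" using ex_min[OF fM, of tu] by blast
  obtain To where To: "To \<in> M" "\<forall>y\<in>M. tu y \<le> tu To" using ex_max[OF fM, of tu] by blast
  have inM: "B \<in> M" "D \<in> M" "E \<in> M" "F \<in> M" "P \<in> M" "Q \<in> M" by (auto simp: M_def)
  have sB: "sg B = 0" "tu B = 0" by (auto simp: sg_def tu_def)
  have sD: "sg D = u \<bullet> u" "tu D = w \<bullet> w" using uw wu by (auto simp: sg_def tu_def D' inner_add_right)
  have G: "measure lebesgue (convex hull {B+u, B, B+w, B+u+w, L, Rr, Bo, To}) \<ge>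
    (2*(u\<bullet>u)*(w\<bullet>w) - (u\<bullet>u)*(w \<bullet> (Bo - B)) + (w\<bullet>w)*(u \<bullet> (Rr - B) - u\<bullet>u)
     + (u\<bullet>u)*(w \<bullet> (To - B) - w\<bullet>w) - (w\<bullet>w)*(u \<bullet> (L - B))) / (2*norm u*norm w)"
  proof (rule geom[OF uw])
    show "u \<bullet> (L - B) \<le> 0" "u \<bullet> (L - B) \<le> u \<bullet> (Bo - B)" "u \<bullet> (L - B) \<le> u \<bullet> (To - B)"
      using L(2) inM Bo(1) To(1) sB unfolding sg_def by auto
    show "u \<bullet> (Rr - B) \<ge> u \<bullet> u" "u \<bullet> (Rr - B) \<ge> u \<bullet> (Bo - B)" "u \<bullet> (Rr - B) \<ge> u \<bullet> (To - B)"
      using Rr(2) inM Bo(1) To(1) sD unfolding sg_def by auto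
    show "w \<bullet> (Bo - B) \<le> 0" "w \<bullet> (Bo - B) \<le> w \<bullet> (L - B)" "w \<bullet> (Bo - B) \<le> w \<bullet> (Rr - B)"
      using Bo(2) inM L(1) Rr(1) sB unfolding tu_def by auto
    show "w \<bullet> (To - B) \<ge> w \<bullet> w" "w \<bullet> (To - B) \<ge> w \<bullet> (L - B)" "w \<bullet> (To - B) \<ge> w \<bullet> (Rr - B)"
      using To(2) inM L(1) Rr(1) sD unfolding tu_def by auto
  qed
  have sub: "convex hull {B+u, B, B+w, B+u+w, L, Rr, Bo, To} \<subseteq> convex hull {A, B, C, D, E, F, P, Q}"
    using L(1) Rr(1) Bo(1) To(1) unfolding M_def A' C' D' by (intro hull_mono) auto
  have mono: "measure lebesgue (convex hull {B+u, B, B+w, B+u+w, L, Rr, Bo, To}) \<le> hull_area {A, B, C, D, E, F, P, Q}"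
    unfolding hull_area_def
  proof (rule measure_mono_fmeasurable[OF sub])
    show "convex hull {B+u, B, B+w, B+u+w, L, Rr, Bo, To} \<in> sets lebesgue"
      by (rule fmeasurableD, rule lmeasurable_compact, rule finite_imp_compact_convex_hull) simp
    show "convex hull {A, B, C, D, E, F, P, Q} \<in> fmeasurable lebesgue"
      by (rule lmeasurable_compact, rule finite_imp_compact_convex_hull) simp
  qed
  have e1: "height B C E F * norm u \<le> u \<bullet> (Rr - B) - u \<bullet> (L - B)"
  proof -
    have "height B C E F * norm u \<le> \<bar>(F - E) \<bullet> u\<bar>" using h1 uw(2) by (simp add: field_simps)
    also have "\<bar>(F - E) \<bullet> u\<bar> = \<bar>sg F - sg E\<bar>" by (simp add: sg_def inner_diff_right inner_diff_left inner_commute)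
    also have "\<dots> \<le> sg Rr - sg L"
    proof -
      have "sg L \<le> sg E" "sg L \<le> sg F" "sg E \<le> sg Rr" "sg F \<le> sg Rr" using L(2) Rr(2) inM by auto
      then show ?thesis by (simp add: abs_le_iff)
    qed
    finally show ?thesis by (simp add: sg_def)
  qed
  have e2: "height A B P Q * norm w \<le> w \<bullet> (To - B) - w \<bullet> (Bo - B)"
  proof -
    have "height A B P Q * norm w \<le> \<bar>(Q - P) \<bullet> w\<bar>" using h2 uw(3) by (simp add: field_simps)
    also have "\<bar>(Q - P) \<bullet> w\<bar> = \<bar>tu Q - tu P\<bar>" by (simp add: tu_def inner_diff_right inner_diff_left inner_commute)
    also have "\<dots> \<le> tu To - tu Bo"
    proof -
      have "tu Bo \<le> tu P" "tu Bo \<le> tu Q" "tu P \<le> tu To" "tu Q \<le> tu To" using Bo(2) To(2) inM by auto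
      then show ?thesis by (simp add: abs_le_iff)
    qed
    finally show ?thesis by (simp add: tu_def)
  qed
  have fin: "(1/2) * (height B C E F - norm u) * norm w + (1/2) * (height A B P Q - norm w) * norm u + norm u * norm w \<le>
    (2*(norm u)^2*(norm w)^2 - (norm u)^2*(w \<bullet> (Bo - B)) + (norm w)^2*(u \<bullet> (Rr - B) - (norm u)^2)
     + (norm u)^2*(w \<bullet> (To - B) - (norm w)^2) - (norm w)^2*(u \<bullet> (L - B))) / (2*norm u*norm w)"
    by (rule fin_ineq) (use uw e1 e2 in auto)
  show ?thesis unfolding dAB dBC using fin G mono by (simp add: power2_norm_eq_inner)
qed


end
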